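(* Let $G$ be a $2$-connected series parallel graph which does not consist of a single edge. Then there exist vertices $s \neq t$ of $G$ such that $(G,s,t)$ is a TTSPG and \[(G,s,t) = (P_1,s,t)\,\|\,(P_2,s,t)\,\|\,(H,s,t),\] where $P_1$ and $P_2$ are paths (path subgraphs, with distinct edge sets) joining $s$ and $t$, and $H$ is a possibly empty subgraph of $G$ (empty meaning that the factor $(H,s,t)$ is absent) such that, when nonempty, $(H,s,t)$ is a TTSPG.
   Context: A graph $G=(V,E)$ has a finite vertex set $V$ and a finite multiset $E$ of unordered pairs of distinct vertices (multiple edges allowed, no loops). A path graph is a graph isomorphic to the graph with vertices $\{1,\dots,n\}$ and edges $\{i,i+1\}$, $i=1,\dots,n-1$; it joins its endpoints $1$ and $n$. A graph is $2$-connected if it is connected and deleting any single vertex (with its incident edges) leaves a connected graph. A two terminal graph (TTG) is a triple $(G,s,t)$ with $s\ne t$ vertices of $G$. The series composition is $(G_1,s_1,t_1)\circ(G_2,s_2,t_2) = (G_1\cup_{t_2\sim s_1} G_2, s_2, t_1)$ (disjoint union with $t_2$ and $s_1$ identified), and the parallel composition is $(G_1,s_1,t_1)\|(G_2,s_2,t_2) = (G_1\cup_{s_1\sim s_2,\,t_1\sim t_2}G_2, s_1,t_1)$ (disjoint union with $s_1,s_2$ identified and $t_1,t_2$ identified); parallel composition is commutative and associative. The class of two terminal series parallel graphs (TTSPGs) is the smallest class of TTGs containing $(K_2,s,t)$ (a single edge $\{s,t\}$) and closed under series and parallel composition. A graph $G$ is series parallel if $(G,s,t)$ is a TTSPG for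 some choice of $s,t$. *)

theory Defs
  imports Main
begin

text \<open>Multiple edges
  are distinct elements of E with the same endpoints. Subgraphs share the incidence
  function.\<close>

definition multigraph :: "('e \<Rightarrow> 'v set) \<Rightarrow> 'v set \<Rightarrow> 'e set \<Rightarrow> bool" where
  "multigraph inc V E \<longleftrightarrow> finite V \<and> finite E \<and>
     (\<forall>e\<in>E. inc e \<subseteq> V \<and> card (inc e) = 2)"

definition subgraph :: "('e \<Rightarrow> 'v set) \<Rightarrow> 'v set \<Rightarrow> 'e set \<Rightarrow> 'v set \<Rightarrow> 'e set \<Rightarrow> bool" where
  "subgraph inc V' E' V E \<longleftrightarrow> V' \<subseteq> V \<and> E' \<subseteq> E \<and> (\<forall>e\<in>E'. inc e \<subseteq> V')"

definition adj :: "('e \<Rightarrow> 'v set) \<Rightarrow> 'e set \<Rightarrow> ('v \<times> 'v) set" where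
  "adj inc E = {(u, v). \<exists>e\<in>E. inc e = {u, v}}"

definition connected_graph :: "('e \<Rightarrow> 'v set) \<Rightarrow> 'v set \<Rightarrow> 'e set \<Rightarrow> bool" where
  "connected_graph inc V E \<longleftrightarrow> V \<noteq> {} \<and> (\<forall>u\<in>V. \<forall>v\<in>V. (u, v) \<in> (adj inc E)\<^sup>*)"

definition two_connected :: "('e \<Rightarrow> 'v set) \<Rightarrow> 'v set \<Rightarrow> 'e set \<Rightarrow> bool" where
  "two_connected inc V E \<longleftrightarrow> connected_graph inc V E \<and>
     (\<forall>x\<in>V. connected_graph inc (V - {x}) {e\<in>E. x \<notin> inc e})"

text \<open>Two terminal series parallel graphs, realised intrinsically: (V,E,s,t) is a TTSPG
  iff it is a single edge from s to t, or it splits into two edge-disjoint subgraphs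
  meeting exactly in the identified vertices, each a TTSPG with the appropriate
  terminals (series: meeting in the middle vertex m; parallel: meeting in {s,t}).
  This is exactly the statement that (G,s,t) is isomorphic to a series resp.
  parallel composition of TTSPGs.\<close>
inductive ttspg :: "('e \<Rightarrow> 'v set) \<Rightarrow> 'v set \<Rightarrow> 'e set \<Rightarrow> 'v \<Rightarrow> 'v \<Rightarrow> bool"
  for inc :: "'e \<Rightarrow> 'v set" where
  single_edge: "s \<noteq> t \<Longrightarrow> inc e = {s, t} \<Longrightarrow> ttspg inc {s, t} {e} s t"
| series: "ttspg inc V1 E1 s m \<Longrightarrow> ttspg inc V2 E2 m t \<Longrightarrow> V1 \<inter> V2 = {m} \<Longrightarrow>
     E1 \<inter> E2 = {} \<Longrightarrow> ttspg inc (V1 \<union> V2) (E1 \<union> E2) s t"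
| parallel: "ttspg inc V1 E1 s t \<Longrightarrow> ttspg inc V2 E2 s t \<Longrightarrow> V1 \<inter> V2 = {s, t} \<Longrightarrow>
     E1 \<inter> E2 = {} \<Longrightarrow> ttspg inc (V1 \<union> V2) (E1 \<union> E2) s t"

definition series_parallel :: "('e \<Rightarrow> 'v set) \<Rightarrow> 'v set \<Rightarrow> 'e set \<Rightarrow> bool" where
  "series_parallel inc V E \<longleftrightarrow> (\<exists>s t. ttspg inc V E s t)"

definition path_joining :: "('e \<Rightarrow> 'v set) \<Rightarrow> 'v set \<Rightarrow> 'e set \<Rightarrow> 'v \<Rightarrow> 'v \<Rightarrow> bool" where
  "path_joining inc V' E' s t \<longleftrightarrow> (\<exists>vs es. vs \<noteq> [] \<and> distinct vs \<and> distinct es \<and>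
     hd vs = s \<and> last vs = t \<and> length es + 1 = length vs \<and>
     (\<forall>i < length es. inc (es ! i) = {vs ! i, vs ! Suc i}) \<and>
     set vs = V' \<and> set es = E')"

end

theory Submission
  imports Defs
begin

lemma ttspg_basic:
  assumes "ttspg inc V E s t"
  shows "s \<noteq> t \<and> s \<in> V \<and> t \<in> V \<and> (\<forall>e\<in>E. inc e \<subseteq> V)"
  using assms by induction auto

lemma ttspg_sym: "ttspg inc V E s t \<Longrightarrow> ttspg inc V E t s"
proof (induction rule: ttspg.induct)
  case (single_edge s t e)
  then show ?case by (metis ttspg.single_edge insert_commute)
next
  case (series V1 E1 s m V2 E2 t)
  have "ttspg inc (V2 \<union> V1) (E2 \<union> E1) t s"
    by (rule ttspg.series[OF series.IH(2) series.IH(1)]) (use series in auto)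
  then show ?case by (simp add: Un_commute)
next
  case (parallel V1 E1 s t V2 E2)
  have "ttspg inc (V2 \<union> V1) (E2 \<union> E1) t s"
    by (rule ttspg.parallel[OF parallel.IH(2) parallel.IH(1)]) (use parallel in auto)
  then show ?case by (simp add: Un_commute)
qed

lemma path_list_ttspg:
  "distinct vs \<Longrightarrow> distinct es \<Longrightarrow> length es + 1 = length vs \<Longrightarrow>
   (\<forall>i < length es. inc (es ! i) = {vs ! i, vs ! Suc i}) \<Longrightarrow> es \<noteq> [] \<Longrightarrow>
   ttspg inc (set vs) (set es) (hd vs) (last vs)"
proof (induction es arbitrary: vs)
  case Nil
  then show ?case by simp
next
  case (Cons e es)
  obtain v0 v1 vs'' where vs: "vs = v0 # v1 # vs''"
    using Cons.prems(3) by (cases vs; cases "tl vs"; auto)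
  have e: "inc e = {v0, v1}" using Cons.prems(4) vs by force
  have ne: "v0 \<noteq> v1" using Cons.prems(1) vs by auto
  show ?case
  proof (cases "es = []")
    case True
    then have "vs'' = []" using Cons.prems(3) vs by simp
    then show ?thesis using True vs e ne ttspg.single_edge[of v0 v1 inc e] by simp
  next
    case False
    have ih: "ttspg inc (set (v1 # vs'')) (set es) v1 (last (v1 # vs''))"
    proof -
      have "\<forall>i < length es. inc (es ! i) = {(v1 # vs'') ! i, (v1 # vs'') ! Suc i}"
      proof (intro allI impI)
        fix i assume "i < length es"
        then show "inc (es ! i) = {(v1 # vs'') ! i, (v1 # vs'') ! Suc i}"
          using Cons.prems(4) vs by (metis Suc_less_eq length_Cons nth_Cons_Suc)
      qed
      then show ?thesis using Cons.IH[of "v1 # vs''"] Cons.prems vs False by simp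
    qed
    have "ttspg inc ({v0, v1} \<union> set (v1 # vs'')) ({e} \<union> set es) v0 (last (v1 # vs''))"
      by (rule ttspg.series[OF ttspg.single_edge[of v0 v1 inc e, OF ne e] ih]) (use Cons.prems vs in auto)
    then show ?thesis using vs by (simp add: insert_commute)
  qed
qed

lemma path_ttspg:
  assumes "path_joining inc V E a b" "a \<noteq> b"
  shows "ttspg inc V E a b"
proof -
  obtain vs es where p: "vs \<noteq> []" "distinct vs" "distinct es" "hd vs = a" "last vs = b"
    "length es + 1 = length vs" "\<forall>i < length es. inc (es ! i) = {vs ! i, vs ! Suc i}"
    "set vs = V" "set es = E"
    using assms(1) unfolding path_joining_def by blast
  have "es \<noteq> []"
  proof
    assume "es = []"
    then have "length vs = 1" using p by simp
    then have "hd vs = last vs" by (cases vs) auto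
    then show False using p assms(2) by simp
  qed
  then show ?thesis using path_list_ttspg[OF p(2,3,6,7)] p by simp
qed

lemma path_concat:
  assumes p1: "path_joining inc V1 E1 s m" and p2: "path_joining inc V2 E2 m t"
    and i: "V1 \<inter> V2 = {m}" "E1 \<inter> E2 = {}" and sm: "s \<noteq> m"
  shows "path_joining inc (V1 \<union> V2) (E1 \<union> E2) s t"
proof -
  obtain vs1 es1 where a: "vs1 \<noteq> []" "distinct vs1" "distinct es1" "hd vs1 = s" "last vs1 = m"
    "length es1 + 1 = length vs1" "\<forall>i < length es1. inc (es1 ! i) = {vs1 ! i, vs1 ! Suc i}"
    "set vs1 = V1" "set es1 = E1"
    using p1 unfolding path_joining_def by blast
  obtain vs2 es2 where b: "vs2 \<noteq> []" "distinct vs2" "distinct es2" "hd vs2 = m" "last vs2 = t"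
    "length es2 + 1 = length vs2" "\<forall>i < length es2. inc (es2 ! i) = {vs2 ! i, vs2 ! Suc i}"
    "set vs2 = V2" "set es2 = E2"
    using p2 unfolding path_joining_def by blast
  define n1 where "n1 = length es1"
  have lb: "length (butlast vs1) = n1" using a(6) n1_def by simp
  have bl: "butlast vs1 \<noteq> []"
  proof
    assume "butlast vs1 = []"
    then have "vs1 = [last vs1]" using a(1) by (metis append_butlast_last_id append_Nil)
    then show False using a(4,5) sm by (metis list.sel(1))
  qed
  have vs1eq: "vs1 = butlast vs1 @ [m]" using a(1,5) by (metis append_butlast_last_id)
  have mnot: "m \<notin> set (butlast vs1)" using a(2) vs1eq by (metis distinct_append distinct1_rotate rotate1.simps(2) distinct.simps(2))
  have setb: "set vs1 = insert m (set (butlast vs1))" using vs1eq by (metis set_append empty_set list.set(2) Un_insert_right sup_bot_right)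
  have m2: "m \<in> set vs2" using b(1,4) by (metis hd_in_set)
  let ?vs = "butlast vs1 @ vs2" and ?es = "es1 @ es2"
  have "?vs \<noteq> []" using b(1) by simp
  moreover have "distinct ?vs"
    using a(2) b(2) setb mnot i a(8) b(8) by (auto simp: distinct_butlast)
  moreover have "distinct ?es" using a(3) b(3) a(9) b(9) i by auto
  moreover have "hd ?vs = s" using bl a(4) vs1eq by (metis hd_append2 hd_append)
  moreover have "last ?vs = t" using b(1,5) by simp
  moreover have "length ?es + 1 = length ?vs" using lb n1_def b(6) by simp
  moreover have "\<forall>i < length ?es. inc (?es ! i) = {?vs ! i, ?vs ! Suc i}"
  proof (intro allI impI)
    fix i assume il: "i < length ?es"
    show "inc (?es ! i) = {?vs ! i, ?vs ! Suc i}"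
    proof (cases "i < n1")
      case True
      have e: "?es ! i = es1 ! i" using True n1_def by (simp add: nth_append)
      have v0: "?vs ! i = vs1 ! i" using True lb by (simp add: nth_append nth_butlast)
      have v1: "?vs ! Suc i = vs1 ! Suc i"
      proof (cases "Suc i < n1")
        case True then show ?thesis using lb by (simp add: nth_append nth_butlast)
      next
        case False
        then have si: "Suc i = n1" using \<open>i < n1\<close> by simp
        then have "?vs ! Suc i = vs2 ! 0" using lb by (simp add: nth_append)
        also have "\<dots> = m" using b(1,4) by (simp add: hd_conv_nth)
        also have "\<dots> = vs1 ! n1" using a(1,5,6) n1_def by (metis last_conv_nth diff_Suc_1 add.commute plus_1_eq_Suc)
        finally show ?thesis using si by simp
      qed
      show ?thesis using e v0 v1 a(7) True n1_def by simp
    next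
      case False
      have e: "?es ! i = es2 ! (i - n1)" using False n1_def by (simp add: nth_append)
      have v0: "?vs ! i = vs2 ! (i - n1)" using False lb by (simp add: nth_append)
      have v1: "?vs ! Suc i = vs2 ! Suc (i - n1)" using False lb by (simp add: nth_append Suc_diff_le)
      have "i - n1 < length es2" using il False n1_def by simp
      then show ?thesis using e v0 v1 b(7) by simp
    qed
  qed
  moreover have "set ?vs = V1 \<union> V2" using setb a(8) b(8) m2 by auto
  moreover have "set ?es = E1 \<union> E2" using a(9) b(9) by simp
  ultimately show ?thesis unfolding path_joining_def by blast
qed


definition good where
"good inc V E s t a b VP1 EP1 VP2 EP2 \<longleftrightarrow> a \<noteq> b \<and>
  subgraph inc VP1 EP1 V E \<and> path_joining inc VP1 EP1 a b \<and>
  subgraph inc VP2 EP2 V E \<and> path_joining inc VP2 EP2 a b \<and>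
  VP1 \<inter> VP2 = {a,b} \<and> EP1 \<inter> EP2 = {} \<and>
  {s,t} \<inter> (VP1 \<union> VP2) \<subseteq> {a,b} \<and>
  (\<forall>VX EY. ttspg inc VX EY s t \<and> VX \<inter> V = {s,t} \<and> EY \<inter> E = {} \<longrightarrow>
     ttspg inc ((V - (VP1 \<union> VP2)) \<union> {a,b} \<union> VX) ((E - (EP1 \<union> EP2)) \<union> EY) a b)"

lemma goodD:
  assumes "good inc V E s t a b VP1 EP1 VP2 EP2"
  shows "a \<noteq> b" "subgraph inc VP1 EP1 V E" "path_joining inc VP1 EP1 a b"
    "subgraph inc VP2 EP2 V E" "path_joining inc VP2 EP2 a b"
    "VP1 \<inter> VP2 = {a,b}" "EP1 \<inter> EP2 = {}" "{s,t} \<inter> (VP1 \<union> VP2) \<subseteq> {a,b}"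
  using assms unfolding good_def by simp_all

lemma goodX:
  assumes "good inc V E s t a b VP1 EP1 VP2 EP2" "ttspg inc VX EY s t" "VX \<inter> V = {s,t}" "EY \<inter> E = {}"
  shows "ttspg inc ((V - (VP1 \<union> VP2)) \<union> {a,b} \<union> VX) ((E - (EP1 \<union> EP2)) \<union> EY) a b"
  using assms unfolding good_def by simp

lemma goodI:
  assumes "a \<noteq> b" "subgraph inc VP1 EP1 V E" "path_joining inc VP1 EP1 a b"
    "subgraph inc VP2 EP2 V E" "path_joining inc VP2 EP2 a b"
    "VP1 \<inter> VP2 = {a,b}" "EP1 \<inter> EP2 = {}" "{s,t} \<inter> (VP1 \<union> VP2) \<subseteq> {a,b}"
    "\<And>VX EY. ttspg inc VX EY s t \<Longrightarrow> VX \<inter> V = {s,t} \<Longrightarrow> EY \<inter> E = {} \<Longrightarrow>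
     ttspg inc ((V - (VP1 \<union> VP2)) \<union> {a,b} \<union> VX) ((E - (EP1 \<union> EP2)) \<union> EY) a b"
  shows "good inc V E s t a b VP1 EP1 VP2 EP2"
  unfolding good_def using assms by simp

lemma subgraph_mono: "subgraph inc V' E' V E \<Longrightarrow> subgraph inc V' E' (V \<union> W) (E \<union> F)"
  unfolding subgraph_def by blast

lemma subgraph_mono2: "subgraph inc V' E' V E \<Longrightarrow> subgraph inc V' E' (W \<union> V) (F \<union> E)"
  unfolding subgraph_def by blast

definition DD where "DD inc V E s t \<longleftrightarrow> path_joining inc V E s t \<or>
  (\<exists>a b VP1 EP1 VP2 EP2. good inc V E s t a b VP1 EP1 VP2 EP2)"

lemma good_series_left:
  assumes g1: "ttspg inc V1 E1 s m" and g2: "ttspg inc V2 E2 m t" and i: "V1 \<inter> V2 = {m}" "E1 \<inter> E2 = {}"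
  and gd: "good inc V1 E1 s m a b VP1 EP1 VP2 EP2"
  shows "good inc (V1 \<union> V2) (E1 \<union> E2) s t a b VP1 EP1 VP2 EP2"
proof -
  from ttspg_basic[OF g1] ttspg_basic[OF g2] have b: "s\<noteq>m" "s \<in> V1" "m \<in> V1" "m\<noteq>t" "m\<in>V2" "t \<in> V2" by auto
  from goodD(2,4)[OF gd] have sub: "VP1 \<subseteq> V1" "VP2 \<subseteq> V1" "EP1 \<subseteq> E1" "EP2 \<subseteq> E1" unfolding subgraph_def by auto
  have sV2: "s \<notin> V2" using i b by auto
  have tV1: "t \<notin> V1" using i b by auto
  have mP: "{s,m} \<inter> (VP1 \<union> VP2) \<subseteq> {a,b}" using goodD(8)[OF gd] by blast
  have X: "ttspg inc ((V1 \<union> V2 - (VP1 \<union> VP2)) \<union> {a,b} \<union> VX) ((E1 \<union> E2 - (EP1 \<union> EP2)) \<union> EY) a b"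
    if x: "ttspg inc VX EY s t" "VX \<inter> (V1 \<union> V2) = {s,t}" "EY \<inter> (E1 \<union> E2) = {}" for VX EY
  proof -
    have tX: "t \<in> VX" "s \<in> VX" using ttspg_basic[OF x(1)] by auto
    have "ttspg inc (V2 \<union> VX) (E2 \<union> EY) m s"
      by (rule ttspg.series[OF g2 ttspg_sym[OF x(1)]]) (use x i b sV2 tX in auto)
    then have X': "ttspg inc (V2 \<union> VX) (E2 \<union> EY) s m" by (rule ttspg_sym)
    have c1: "(V2 \<union> VX) \<inter> V1 = {s, m}" using x(2) i b tX tV1 by auto
    have c2: "(E2 \<union> EY) \<inter> E1 = {}" using x(3) i by blast
    have eqV: "(V1 - (VP1\<union>VP2)) \<union> {a,b} \<union> (V2 \<union> VX) = (V1 \<union> V2 - (VP1 \<union> VP2)) \<union> {a,b} \<union> VX"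
      using sub i mP by blast
    have eqE: "(E1 - (EP1\<union>EP2)) \<union> (E2 \<union> EY) = (E1 \<union> E2 - (EP1 \<union> EP2)) \<union> EY"
      using sub i by blast
    show ?thesis using goodX[OF gd X' c1 c2] unfolding eqV eqE .
  qed
  show ?thesis
  proof (rule goodI)
    show "{s,t} \<inter> (VP1 \<union> VP2) \<subseteq> {a,b}" using goodD(8)[OF gd] sub tV1 by blast
      show "\<And>VX EY. ttspg inc VX EY s t \<Longrightarrow> VX \<inter> (V1 \<union> V2) = {s,t} \<Longrightarrow> EY \<inter> (E1 \<union> E2) = {} \<Longrightarrow>
      ttspg inc ((V1 \<union> V2 - (VP1 \<union> VP2)) \<union> {a,b} \<union> VX) ((E1 \<union> E2 - (EP1 \<union> EP2)) \<union> EY) a b"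
      by (rule X)
  qed (fact goodD[OF gd] subgraph_mono[OF goodD(2)[OF gd]] subgraph_mono[OF goodD(4)[OF gd]]
        subgraph_mono2[OF goodD(2)[OF gd]] subgraph_mono2[OF goodD(4)[OF gd]])+
qed

lemma good_series_right:
  assumes g1: "ttspg inc V1 E1 s m" and g2: "ttspg inc V2 E2 m t" and i: "V1 \<inter> V2 = {m}" "E1 \<inter> E2 = {}"
  and gd: "good inc V2 E2 m t a b VP1 EP1 VP2 EP2"
  shows "good inc (V1 \<union> V2) (E1 \<union> E2) s t a b VP1 EP1 VP2 EP2"
proof -
  from ttspg_basic[OF g1] ttspg_basic[OF g2] have b: "s\<noteq>m" "s \<in> V1" "m \<in> V1" "m\<noteq>t" "m\<in>V2" "t \<in> V2" by auto
  from goodD(2,4)[OF gd] have sub: "VP1 \<subseteq> V2" "VP2 \<subseteq> V2" "EP1 \<subseteq> E2" "EP2 \<subseteq> E2" unfolding subgraph_def by auto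
  have sV2: "s \<notin> V2" using i b by auto
  have tV1: "t \<notin> V1" using i b by auto
  have mP: "{m,t} \<inter> (VP1 \<union> VP2) \<subseteq> {a,b}" using goodD(8)[OF gd] by blast
  have X: "ttspg inc ((V1 \<union> V2 - (VP1 \<union> VP2)) \<union> {a,b} \<union> VX) ((E1 \<union> E2 - (EP1 \<union> EP2)) \<union> EY) a b"
    if x: "ttspg inc VX EY s t" "VX \<inter> (V1 \<union> V2) = {s,t}" "EY \<inter> (E1 \<union> E2) = {}" for VX EY
  proof -
    have tX: "t \<in> VX" "s \<in> VX" using ttspg_basic[OF x(1)] by auto
    have X': "ttspg inc (V1 \<union> VX) (E1 \<union> EY) m t"
      by (rule ttspg.series[OF ttspg_sym[OF g1] x(1)]) (use x i b tV1 tX in auto)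
    have c1: "(V1 \<union> VX) \<inter> V2 = {m, t}" using x(2) i b tX sV2 by auto
    have c2: "(E1 \<union> EY) \<inter> E2 = {}" using x(3) i by blast
    have eqV: "(V2 - (VP1\<union>VP2)) \<union> {a,b} \<union> (V1 \<union> VX) = (V1 \<union> V2 - (VP1 \<union> VP2)) \<union> {a,b} \<union> VX"
      using sub i mP by blast
    have eqE: "(E2 - (EP1\<union>EP2)) \<union> (E1 \<union> EY) = (E1 \<union> E2 - (EP1 \<union> EP2)) \<union> EY"
      using sub i by blast
    show ?thesis using goodX[OF gd X' c1 c2] unfolding eqV eqE .
  qed
  show ?thesis
  proof (rule goodI)
    show "{s,t} \<inter> (VP1 \<union> VP2) \<subseteq> {a,b}" using goodD(8)[OF gd] sub sV2 by blast
      show "\<And>VX EY. ttspg inc VX EY s t \<Longrightarrow> VX \<inter> (V1 \<union> V2) = {s,t} \<Longrightarrow> EY \<inter> (E1 \<union> E2) = {} \<Longrightarrow>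
      ttspg inc ((V1 \<union> V2 - (VP1 \<union> VP2)) \<union> {a,b} \<union> VX) ((E1 \<union> E2 - (EP1 \<union> EP2)) \<union> EY) a b"
      by (rule X)
  qed (fact goodD[OF gd] subgraph_mono[OF goodD(2)[OF gd]] subgraph_mono[OF goodD(4)[OF gd]]
        subgraph_mono2[OF goodD(2)[OF gd]] subgraph_mono2[OF goodD(4)[OF gd]])+
qed

lemma good_parallel:
  assumes g1: "ttspg inc V1 E1 s t" and g2: "ttspg inc V2 E2 s t" and i: "V1 \<inter> V2 = {s,t}" "E1 \<inter> E2 = {}"
  and gd: "good inc V1 E1 s t a b VP1 EP1 VP2 EP2"
  shows "good inc (V1 \<union> V2) (E1 \<union> E2) s t a b VP1 EP1 VP2 EP2"
proof -
  from ttspg_basic[OF g1] ttspg_basic[OF g2] have b: "s\<noteq>t" "s \<in> V1" "t \<in> V1" "s\<in>V2" "t \<in> V2" by auto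
  from goodD(2,4)[OF gd] have sub: "VP1 \<subseteq> V1" "VP2 \<subseteq> V1" "EP1 \<subseteq> E1" "EP2 \<subseteq> E1" unfolding subgraph_def by auto
  have mP: "{s,t} \<inter> (VP1 \<union> VP2) \<subseteq> {a,b}" using goodD(8)[OF gd] by blast
  have X: "ttspg inc ((V1 \<union> V2 - (VP1 \<union> VP2)) \<union> {a,b} \<union> VX) ((E1 \<union> E2 - (EP1 \<union> EP2)) \<union> EY) a b"
    if x: "ttspg inc VX EY s t" "VX \<inter> (V1 \<union> V2) = {s,t}" "EY \<inter> (E1 \<union> E2) = {}" for VX EY
  proof -
    have tX: "t \<in> VX" "s \<in> VX" using ttspg_basic[OF x(1)] by auto
    have X': "ttspg inc (V2 \<union> VX) (E2 \<union> EY) s t"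
      by (rule ttspg.parallel[OF g2 x(1)]) (use x i b tX in auto)
    have c1: "(V2 \<union> VX) \<inter> V1 = {s, t}" using x(2) i b tX by auto
    have c2: "(E2 \<union> EY) \<inter> E1 = {}" using x(3) i by blast
    have eqV: "(V1 - (VP1\<union>VP2)) \<union> {a,b} \<union> (V2 \<union> VX) = (V1 \<union> V2 - (VP1 \<union> VP2)) \<union> {a,b} \<union> VX"
      using sub i mP by blast
    have eqE: "(E1 - (EP1\<union>EP2)) \<union> (E2 \<union> EY) = (E1 \<union> E2 - (EP1 \<union> EP2)) \<union> EY"
      using sub i by blast
    show ?thesis using goodX[OF gd X' c1 c2] unfolding eqV eqE .
  qed
  show ?thesis
  proof (rule goodI)
    show "{s,t} \<inter> (VP1 \<union> VP2) \<subseteq> {a,b}" using goodD(8)[OF gd] sub  by blast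
      show "\<And>VX EY. ttspg inc VX EY s t \<Longrightarrow> VX \<inter> (V1 \<union> V2) = {s,t} \<Longrightarrow> EY \<inter> (E1 \<union> E2) = {} \<Longrightarrow>
      ttspg inc ((V1 \<union> V2 - (VP1 \<union> VP2)) \<union> {a,b} \<union> VX) ((E1 \<union> E2 - (EP1 \<union> EP2)) \<union> EY) a b"
      by (rule X)
  qed (fact goodD[OF gd] subgraph_mono[OF goodD(2)[OF gd]] subgraph_mono[OF goodD(4)[OF gd]]
        subgraph_mono2[OF goodD(2)[OF gd]] subgraph_mono2[OF goodD(4)[OF gd]])+
qed

lemma good_base:
  assumes g1: "ttspg inc V1 E1 s t" and g2: "ttspg inc V2 E2 s t" and i: "V1 \<inter> V2 = {s,t}" "E1 \<inter> E2 = {}"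
  and p1: "path_joining inc V1 E1 s t" and p2: "path_joining inc V2 E2 s t"
  shows "good inc (V1 \<union> V2) (E1 \<union> E2) s t s t V1 E1 V2 E2"
proof -
  from ttspg_basic[OF g1] ttspg_basic[OF g2] have b: "s\<noteq>t" "s \<in> V1" "t \<in> V1" "s\<in>V2" "t \<in> V2"
    "\<forall>e\<in>E1. inc e \<subseteq> V1" "\<forall>e\<in>E2. inc e \<subseteq> V2" by auto
  have X: "ttspg inc ((V1 \<union> V2 - (V1 \<union> V2)) \<union> {s,t} \<union> VX) ((E1 \<union> E2 - (E1 \<union> E2)) \<union> EY) s t"
    if x: "ttspg inc VX EY s t" for VX EY
  proof -
    have "s \<in> VX" "t \<in> VX" using ttspg_basic[OF x] by auto
    then have "(V1 \<union> V2 - (V1 \<union> V2)) \<union> {s,t} \<union> VX = VX" by blast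
    moreover have "(E1 \<union> E2 - (E1 \<union> E2)) \<union> EY = EY" by blast
    ultimately show ?thesis using x by simp
  qed
  show ?thesis by (rule goodI) (use b i p1 p2 X in \<open>auto simp: subgraph_def\<close>)
qed

lemma DD_all: "ttspg inc V E s t \<Longrightarrow> DD inc V E s t"
proof (induction rule: ttspg.induct)
  case (single_edge s t e)
  have "path_joining inc {s, t} {e} s t" unfolding path_joining_def
    by (rule exI[of _ "[s,t]"], rule exI[of _ "[e]"]) (use single_edge in auto)
  then show ?case unfolding DD_def by blast
next
  case (series V1 E1 s m V2 E2 t)
  have sm: "s \<noteq> m" using ttspg_basic[OF series.hyps(1)] by simp
  have "path_joining inc (V1 \<union> V2) (E1 \<union> E2) s t \<or>
    (\<exists>a b VP1 EP1 VP2 EP2. good inc (V1 \<union> V2) (E1 \<union> E2) s t a b VP1 EP1 VP2 EP2)"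
  proof (cases "path_joining inc V1 E1 s m \<and> path_joining inc V2 E2 m t")
    case True
    then show ?thesis using path_concat[OF _ _ series.hyps(3,4) sm] by blast
  next
    case False
    then consider (a) "\<exists>a b VP1 EP1 VP2 EP2. good inc V1 E1 s m a b VP1 EP1 VP2 EP2"
      | (b) "\<exists>a b VP1 EP1 VP2 EP2. good inc V2 E2 m t a b VP1 EP1 VP2 EP2"
      using series.IH unfolding DD_def by blast
    then show ?thesis
    proof cases
      case a
      then show ?thesis using good_series_left[OF series.hyps] by blast
    next
      case b
      then show ?thesis using good_series_right[OF series.hyps] by blast
    qed
  qed
  then show ?case unfolding DD_def .
next
  case (parallel V1 E1 s t V2 E2)
  have c1: "V2 \<inter> V1 = {s,t}" "E2 \<inter> E1 = {}" using parallel.hyps by auto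
  have "good inc (V2 \<union> V1) (E2 \<union> E1) s t a b VP1 EP1 VP2 EP2"
    if "good inc V2 E2 s t a b VP1 EP1 VP2 EP2" for a b VP1 EP1 VP2 EP2
    using good_parallel[OF parallel.hyps(2,1) c1 that] .
  then have "good inc (V1 \<union> V2) (E1 \<union> E2) s t a b VP1 EP1 VP2 EP2"
    if "good inc V2 E2 s t a b VP1 EP1 VP2 EP2" for a b VP1 EP1 VP2 EP2
    using that by (simp add: Un_commute)
  then show ?case
    using parallel.IH good_parallel[OF parallel.hyps] good_base[OF parallel.hyps]
    unfolding DD_def by blast
qed


lemma final_from_good:
  assumes g1: "ttspg inc V1 E1 s t" and g2: "ttspg inc V2 E2 s t" and i: "V1 \<inter> V2 = {s,t}" "E1 \<inter> E2 = {}"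
    and gd: "good inc V1 E1 s t a b VP1 EP1 VP2 EP2"
  shows "\<exists>s t VP1 EP1 VP2 EP2 VH EH. s \<noteq> t \<and> ttspg inc (V1 \<union> V2) (E1 \<union> E2) s t \<and>
     subgraph inc VP1 EP1 (V1 \<union> V2) (E1 \<union> E2) \<and> path_joining inc VP1 EP1 s t \<and>
     subgraph inc VP2 EP2 (V1 \<union> V2) (E1 \<union> E2) \<and> path_joining inc VP2 EP2 s t \<and>
     subgraph inc VH EH (V1 \<union> V2) (E1 \<union> E2) \<and> ((VH = {} \<and> EH = {}) \<or> ttspg inc VH EH s t) \<and>
     V1 \<union> V2 = VP1 \<union> VP2 \<union> VH \<and> E1 \<union> E2 = EP1 \<union> EP2 \<union> EH \<and>
     VP1 \<inter> VP2 = {s, t} \<and> VH \<inter> (VP1 \<union> VP2) \<subseteq> {s, t} \<and>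
     EP1 \<inter> EP2 = {} \<and> EH \<inter> (EP1 \<union> EP2) = {}"
proof -
  define VH where "VH = (V1 - (VP1 \<union> VP2)) \<union> {a,b} \<union> V2"
  define EH where "EH = (E1 - (EP1 \<union> EP2)) \<union> E2"
  note G = goodD[OF gd]
  have sub: "VP1 \<subseteq> V1" "VP2 \<subseteq> V1" "EP1 \<subseteq> E1" "EP2 \<subseteq> E1"
    using G(2,4) unfolding subgraph_def by auto
  have i': "V2 \<inter> V1 = {s,t}" "E2 \<inter> E1 = {}" using i by auto
  have H: "ttspg inc VH EH a b" unfolding VH_def EH_def by (rule goodX[OF gd g2 i'])
  have p1: "ttspg inc VP1 EP1 a b" by (rule path_ttspg[OF G(3) G(1)])
  have p2: "ttspg inc VP2 EP2 a b" by (rule path_ttspg[OF G(5) G(1)])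
  have P: "ttspg inc (VP1 \<union> VP2) (EP1 \<union> EP2) a b" by (rule ttspg.parallel[OF p1 p2 G(6) G(7)])
  have abP: "a \<in> VP1" "b \<in> VP1" using ttspg_basic[OF p1] by auto
  have abH: "a \<in> VH" "b \<in> VH" by (simp_all add: VH_def)
  have VPH: "VH \<inter> (VP1 \<union> VP2) \<subseteq> {a,b}"
  proof
    fix x assume x: "x \<in> VH \<inter> (VP1 \<union> VP2)"
    show "x \<in> {a,b}"
    proof (cases "x \<in> V2")
      case True
      then have "x \<in> {s,t}" using x sub i by auto
      then show ?thesis using x G(8) by auto
    next
      case False then show ?thesis using x unfolding VH_def by auto
    qed
  qed
  have c1: "(VP1 \<union> VP2) \<inter> VH = {a,b}" using VPH abH abP by auto
  have c2: "(EP1 \<union> EP2) \<inter> EH = {}" unfolding EH_def using i sub by auto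
  have GG: "ttspg inc ((VP1 \<union> VP2) \<union> VH) ((EP1 \<union> EP2) \<union> EH) a b" by (rule ttspg.parallel[OF P H c1 c2])
  have eV: "V1 \<union> V2 = VP1 \<union> VP2 \<union> VH" unfolding VH_def using sub abP by auto
  have eE: "E1 \<union> E2 = EP1 \<union> EP2 \<union> EH" unfolding EH_def using sub by auto
  have T: "ttspg inc (V1 \<union> V2) (E1 \<union> E2) a b" using GG eV eE by simp
  have sH: "subgraph inc VH EH (V1 \<union> V2) (E1 \<union> E2)"
    unfolding subgraph_def using ttspg_basic[OF H] eV eE by auto
  have c3: "EH \<inter> (EP1 \<union> EP2) = {}" using c2 by auto
  show ?thesis
    apply (rule exI[of _ a], rule exI[of _ b], rule exI[of _ VP1], rule exI[of _ EP1],
        rule exI[of _ VP2], rule exI[of _ EP2], rule exI[of _ VH], rule exI[of _ EH])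
    by (intro conjI disjI2) (fact G(1) T subgraph_mono[OF G(2)] G(3) subgraph_mono[OF G(4)] G(5) sH H
        eV eE G(6) VPH G(7) c3)+
qed

theorem mainTheorem1:
  fixes inc :: "'e \<Rightarrow> 'v set" and V :: "'v set" and E :: "'e set"
  assumes "multigraph inc V E"
    and "two_connected inc V E"
    and "series_parallel inc V E"
    and "\<not> (\<exists>e. E = {e} \<and> V = inc e)"
  shows "\<exists>s t VP1 EP1 VP2 EP2 VH EH. s \<noteq> t \<and> ttspg inc V E s t \<and>
     subgraph inc VP1 EP1 V E \<and> path_joining inc VP1 EP1 s t \<and>
     subgraph inc VP2 EP2 V E \<and> path_joining inc VP2 EP2 s t \<and>
     subgraph inc VH EH V E \<and> ((VH = {} \<and> EH = {}) \<or> ttspg inc VH EH s t) \<and>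
     V = VP1 \<union> VP2 \<union> VH \<and> E = EP1 \<union> EP2 \<union> EH \<and>
     VP1 \<inter> VP2 = {s, t} \<and> VH \<inter> (VP1 \<union> VP2) \<subseteq> {s, t} \<and>
     EP1 \<inter> EP2 = {} \<and> EH \<inter> (EP1 \<union> EP2) = {}"
proof -
  obtain s t where st: "ttspg inc V E s t" using assms(3) unfolding series_parallel_def by blast
  from st show ?thesis
  proof (cases rule: ttspg.cases)
    case (single_edge e)
    then show ?thesis using assms(4) by auto
  next
    case (series V1 E1 m V2 E2)
    have b1: "s \<noteq> m" "s \<in> V1" "m \<in> V1" "\<forall>e\<in>E1. inc e \<subseteq> V1" using ttspg_basic[OF series(3)] by auto
    have b2: "m \<noteq> t" "m \<in> V2" "t \<in> V2" "\<forall>e\<in>E2. inc e \<subseteq> V2" using ttspg_basic[OF series(4)] by auto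
    let ?E' = "{e\<in>E. m \<notin> inc e}"
    have conn: "connected_graph inc (V - {m}) ?E'"
      using assms(2) b1 series(1) unfolding two_connected_def by auto
    have "s \<in> V - {m}" "t \<in> V - {m}" using b1 b2 series(1) by auto
    then have path: "(s, t) \<in> (adj inc ?E')\<^sup>*" using conn unfolding connected_graph_def by blast
    have reach: "y \<in> V1 \<and> y \<noteq> m" if "(s, y) \<in> (adj inc ?E')\<^sup>*" for y
      using that
    proof (induction rule: rtrancl_induct)
      case base then show ?case using b1 by simp
    next
      case (step y z)
      obtain e where e: "e \<in> E" "m \<notin> inc e" "inc e = {y, z}" using step(2) unfolding adj_def by blast
      have "e \<notin> E2"
      proof
        assume "e \<in> E2"
        then have "y \<in> V2" using b2(4) e(3) by auto
        then have "y \<in> V1 \<inter> V2" using step(3) by auto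
        then show False using series(5) step(3) by auto
      qed
      then have "e \<in> E1" using e(1) series(2) by auto
      then show ?case using b1(4) e by auto
    qed
    have "t \<in> V1" "t \<noteq> m" using reach[OF path] by auto
    then have "t \<in> V1 \<inter> V2" using b2 by auto
    then show ?thesis using series(5) \<open>t \<noteq> m\<close> by auto
  next
    case (parallel V1 E1 V2 E2)
    have i': "V2 \<inter> V1 = {s,t}" "E2 \<inter> E1 = {}" using parallel by auto
    have d1: "DD inc V1 E1 s t" by (rule DD_all[OF parallel(3)])
    have d2: "DD inc V2 E2 s t" by (rule DD_all[OF parallel(4)])
    show ?thesis
    proof (cases "\<exists>a b VP1 EP1 VP2 EP2. good inc V1 E1 s t a b VP1 EP1 VP2 EP2")
      case True
      then obtain a b VP1 EP1 VP2 EP2 where "good inc V1 E1 s t a b VP1 EP1 VP2 EP2" by blast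
      from final_from_good[OF parallel(3,4,5,6) this] show ?thesis using parallel(1,2) by simp
    next
      case F1: False
      then have p1: "path_joining inc V1 E1 s t" using d1 unfolding DD_def by blast
      show ?thesis
      proof (cases "\<exists>a b VP1 EP1 VP2 EP2. good inc V2 E2 s t a b VP1 EP1 VP2 EP2")
        case True
        then obtain a b VP1 EP1 VP2 EP2 where "good inc V2 E2 s t a b VP1 EP1 VP2 EP2" by blast
        from final_from_good[OF parallel(4,3) i' this] show ?thesis using parallel(1,2)
          by (simp add: Un_commute)
      next
        case False
        then have p2: "path_joining inc V2 E2 s t" using d2 unfolding DD_def by blast
        have stn: "s \<noteq> t" using ttspg_basic[OF st] by simp
        show ?thesis
          apply (rule exI[of _ s], rule exI[of _ t], rule exI[of _ V1], rule exI[of _ E1],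
            rule exI[of _ V2], rule exI[of _ E2], rule exI[of _ "{}"], rule exI[of _ "{}"])
          using stn st p1 p2 parallel(1,2,5,6) ttspg_basic[OF parallel(3)] ttspg_basic[OF parallel(4)]
          by (auto simp: subgraph_def)
      qed
    qed
  qed
qed

end
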